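(* Let $T$ be a minimal homeomorphism of a compact metric space $X$, let $G$ be a locally compact second countable group, let $f\colon X\to G$ be a continuous regular cocycle and let $C\subseteq X\times G$ be a surjective $\mathbf T_f$-orbit closure. Then every nonempty relatively open subset of $C$ projects, under the first coordinate projection $\pi_X\colon X\times G\to X$, onto a subset of $X$ with nonempty interior.
   Context: The cocycle is $f(n,x)=f(T^{n-1}x)\cdots f(x)$ for $n\ge1$, $f(0,x)=\mathbf 1_G$, $f(n,x)=f(-n,T^nx)^{-1}$ for $n<0$. The skew product is $\mathbf T_f(x,g)=(Tx,f(x)g)$ on $X\times G$. A surjective $\mathbf T_f$-orbit closure is the closure of the $\mathbf T_f$-orbit of a single point of $X\times G$ which projects onto all of $X$ under $\pi_X$; $f$ is regular if such an orbit closure exists. *)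

theory Defs
  imports "HOL-Analysis.Analysis"
begin

definition topological_group :: "('g::topological_space \<Rightarrow> 'g \<Rightarrow> 'g) \<Rightarrow> 'g \<Rightarrow> ('g \<Rightarrow> 'g) \<Rightarrow> bool" where
  "topological_group mul e ginv \<longleftrightarrow>
     (\<forall>a b c. mul (mul a b) c = mul a (mul b c)) \<and>
     (\<forall>a. mul e a = a) \<and> (\<forall>a. mul a e = a) \<and>
     (\<forall>a. mul (ginv a) a = e) \<and> (\<forall>a. mul a (ginv a) = e) \<and>
     continuous_on UNIV (\<lambda>p. mul (fst p) (snd p)) \<and>
     continuous_on UNIV ginv"

definition minimal_map :: "('a::topological_space \<Rightarrow> 'a) \<Rightarrow> bool" where
  "minimal_map T \<longleftrightarrow> (\<forall>A. closed A \<and> A \<noteq> {} \<and> T ` A = A \<longrightarrow> A = UNIV)"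

definition cocycle :: "('g \<Rightarrow> 'g \<Rightarrow> 'g) \<Rightarrow> 'g \<Rightarrow> ('g \<Rightarrow> 'g) \<Rightarrow> ('a \<Rightarrow> 'a) \<Rightarrow> ('a \<Rightarrow> 'g) \<Rightarrow> int \<Rightarrow> 'a \<Rightarrow> 'g" where
  "cocycle mul e ginv T f n x =
     (if n \<ge> 0 then foldr (\<lambda>k acc. mul acc (f ((T ^^ k) x))) [0..<nat n] e
      else ginv (foldr (\<lambda>k acc. mul acc (f ((T ^^ k) ((inv T ^^ nat (-n)) x)))) [0..<nat (-n)] e))"

definition skew :: "('a \<Rightarrow> 'a) \<Rightarrow> ('g \<Rightarrow> 'g \<Rightarrow> 'g) \<Rightarrow> ('a \<Rightarrow> 'g) \<Rightarrow> 'a \<times> 'g \<Rightarrow> 'a \<times> 'g" where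
  "skew T mul f = (\<lambda>(x, g). (T x, mul (f x) g))"

definition full_orbit :: "('b \<Rightarrow> 'b) \<Rightarrow> 'b \<Rightarrow> 'b set" where
  "full_orbit S p = {(S ^^ n) p | n. True} \<union> {(inv S ^^ n) p | n. True}"

definition surjective_orbit_closure ::
  "('a \<Rightarrow> 'a) \<Rightarrow> ('g \<Rightarrow> 'g \<Rightarrow> 'g) \<Rightarrow> ('a \<Rightarrow> 'g) \<Rightarrow> ('a::topological_space \<times> 'g::topological_space) set \<Rightarrow> bool" where
  "surjective_orbit_closure T mul f C \<longleftrightarrow>
     (\<exists>p. C = closure (full_orbit (skew T mul f) p) \<and> fst ` C = UNIV)"

definition regular_cocycle ::
  "('a::topological_space \<Rightarrow> 'a) \<Rightarrow> ('g::topological_space \<Rightarrow> 'g \<Rightarrow> 'g) \<Rightarrow> ('a \<Rightarrow> 'g) \<Rightarrow> bool" where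
  "regular_cocycle T mul f \<longleftrightarrow> (\<exists>C. surjective_orbit_closure T mul f C)"

end

theory Submission
  imports Defs
begin


lemma Hausdorff_t2: "Hausdorff_space (euclidean :: 'g::t2_space topology)"
  unfolding Hausdorff_space_def disjnt_def by (metis hausdorff open_openin)

lemma lc_nbhd:
  fixes B :: "'g::t2_space set"
  assumes lc: "locally_compact_space (euclidean :: 'g topology)" and "open B" "y \<in> B"
  shows "\<exists>b. open b \<and> y \<in> b \<and> compact (closure b) \<and> closure b \<subseteq> B"
proof -
  have "regular_space (euclidean :: 'g topology)"
    using lc Hausdorff_t2 locally_compact_Hausdorff_imp_regular_space by blast
  then obtain U1 V1 where UV: "open U1" "open V1" "y \<in> U1" "- B \<subseteq> V1" "U1 \<inter> V1 = {}"
    using assms(2,3) unfolding regular_space_def disjnt_def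
    by (metis Compl_iff DiffI UNIV_I closed_closedin open_closed open_openin topspace_euclidean)
  have cl: "closure U1 \<subseteq> B"
    using UV closure_minimal[of U1 "- V1"] by blast
  have "neighbourhood_base_of (\<lambda>U. openin euclidean U \<and> compactin euclidean (euclidean closure_of U)) (euclidean :: 'g topology)"
    using assms(1) locally_compact_space_neighbourhood_base_open_closure_of[of "euclidean :: 'g topology"] Hausdorff_t2
    by blast
  then obtain U V where "open U" "open V" "compact (closure V)" "y \<in> U" "U \<subseteq> V" "V \<subseteq> U1"
    using UV unfolding neighbourhood_base_of by (metis open_openin euclidean_closure_of compactin_euclidean_iff)
  then show ?thesis
    using cl closure_mono[of V U1]
    by (intro exI[of _ V]) auto
qed

context
  fixes mul :: "'g::topological_space \<Rightarrow> 'g \<Rightarrow> 'g" and e :: 'g and ginv :: "'g \<Rightarrow> 'g"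
  assumes tg: "topological_group mul e ginv"
begin

lemma tg_assoc: "mul (mul a b) c = mul a (mul b c)"
  using tg unfolding topological_group_def by blast
lemma tg_lid: "mul e a = a"
  using tg unfolding topological_group_def by blast
lemma tg_rid: "mul a e = a"
  using tg unfolding topological_group_def by blast
lemma tg_linv: "mul (ginv a) a = e"
  using tg unfolding topological_group_def by blast
lemma tg_rinv: "mul a (ginv a) = e"
  using tg unfolding topological_group_def by blast
lemma tg_cmul: "continuous_on UNIV (\<lambda>p. mul (fst p) (snd p))"
  using tg unfolding topological_group_def by blast
lemma tg_cinv: "continuous_on UNIV ginv"
  using tg unfolding topological_group_def by blast

lemma tg_cancel: "mul (ginv a) (mul a b) = b"
  by (metis tg_assoc tg_linv tg_lid)
lemma tg_cancel2: "mul a (mul (ginv a) b) = b"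
  by (metis tg_assoc tg_rinv tg_lid)
lemma tg_inv_unique: "mul a b = e \<Longrightarrow> ginv a = b"
  by (metis tg_cancel tg_rid)
lemma tg_inv_mul: "ginv (mul a b) = mul (ginv b) (ginv a)"
proof (rule tg_inv_unique)
  show "mul (mul a b) (mul (ginv b) (ginv a)) = e"
    by (metis tg_assoc tg_cancel2 tg_rinv)
qed
lemma tg_inv_inv: "ginv (ginv a) = a"
  using tg_inv_unique tg_linv by blast
lemma tg_inv_e: "ginv e = e"
  using tg_inv_unique tg_lid by blast

lemma tg_leftsmall:
  "mul (ginv (mul (ginv g) a)) (mul (ginv g) b) = mul (ginv a) b"
  by (metis tg_assoc tg_cancel tg_inv_mul tg_inv_inv)

lemma tg_mul_cont:
  assumes "continuous_on S a" "continuous_on S b"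
  shows "continuous_on S (\<lambda>z. mul (a z) (b z))"
proof -
  have "continuous_on S (\<lambda>z. (a z, b z))"
    using assms by (intro continuous_on_Pair)
  then have "continuous_on S ((\<lambda>p. mul (fst p) (snd p)) \<circ> (\<lambda>z. (a z, b z)))"
    by (rule continuous_on_compose) (rule continuous_on_subset[OF tg_cmul], simp)
  then show ?thesis by (simp add: o_def)
qed

lemma tg_inv_cont:
  assumes "continuous_on S a"
  shows "continuous_on S (\<lambda>z. ginv (a z))"
proof -
  have "continuous_on S (ginv \<circ> a)"
    by (rule continuous_on_compose[OF assms]) (rule continuous_on_subset[OF tg_cinv], simp)
  then show ?thesis by (simp add: o_def)
qed

end



definition goodmap :: "('g \<Rightarrow> 'g \<Rightarrow> 'g) \<Rightarrow> ('a::topological_space \<times> 'g::topological_space \<Rightarrow> 'a \<times> 'g) \<Rightarrow> ('a \<Rightarrow> 'a) \<Rightarrow> ('a \<times> 'g) set \<Rightarrow> bool" where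
  "goodmap mul \<Theta> \<tau> Orb \<longleftrightarrow> continuous_on UNIV \<Theta> \<and> \<Theta> ` Orb \<subseteq> Orb \<and>
     (\<forall>x g h. \<Theta> (x, mul g h) = (\<tau> x, mul (snd (\<Theta> (x, g))) h)) \<and>
     (\<forall>z. fst (\<Theta> z) = \<tau> (fst z)) \<and> continuous_on UNIV \<tau> \<and> (\<forall>A. open A \<longrightarrow> open (\<tau> ` A))"

lemma goodmap_id: "goodmap mul id id Orb"
  unfolding goodmap_def by (auto simp: continuous_on_id)

lemma goodmap_id': "goodmap mul (\<lambda>a. a) (\<lambda>a. a) Orb"
  using goodmap_id[of mul Orb] by (simp add: id_def)

lemma goodmap_comp:
  assumes "goodmap mul \<Theta>1 \<tau>1 Orb" "goodmap mul \<Theta>2 \<tau>2 Orb"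
  shows "goodmap mul (\<Theta>1 \<circ> \<Theta>2) (\<tau>1 \<circ> \<tau>2) Orb"
proof -
  have eq: "\<Theta>2 (x, g) = (\<tau>2 x, snd (\<Theta>2 (x, g)))" for x g
    using assms(2) unfolding goodmap_def by (metis fst_conv prod.collapse)
  have "(\<Theta>1 \<circ> \<Theta>2) (x, mul g h) = ((\<tau>1 \<circ> \<tau>2) x, mul (snd ((\<Theta>1 \<circ> \<Theta>2) (x, g))) h)" for x g h
  proof -
    have "(\<Theta>1 \<circ> \<Theta>2) (x, mul g h) = \<Theta>1 (\<tau>2 x, mul (snd (\<Theta>2 (x, g))) h)"
      using assms(2) unfolding goodmap_def by simp
    also have "\<dots> = (\<tau>1 (\<tau>2 x), mul (snd (\<Theta>1 (\<tau>2 x, snd (\<Theta>2 (x, g))))) h)"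
      using assms(1) unfolding goodmap_def by blast
    also have "\<Theta>1 (\<tau>2 x, snd (\<Theta>2 (x, g))) = (\<Theta>1 \<circ> \<Theta>2) (x, g)"
      using eq[of x g] by simp
    finally show ?thesis by simp
  qed
  moreover have "continuous_on UNIV (\<Theta>1 \<circ> \<Theta>2)"
    using assms unfolding goodmap_def by (metis continuous_on_compose continuous_on_subset top_greatest)
  moreover have "continuous_on UNIV (\<tau>1 \<circ> \<tau>2)"
    using assms unfolding goodmap_def by (metis continuous_on_compose continuous_on_subset top_greatest)
  moreover have "(\<Theta>1 \<circ> \<Theta>2) ` Orb \<subseteq> Orb"
    using assms unfolding goodmap_def by (auto simp: image_subset_iff)
  moreover have "\<forall>A. open A \<longrightarrow> open ((\<tau>1 \<circ> \<tau>2) ` A)"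
    using assms unfolding goodmap_def by (metis image_comp)
  moreover have "\<forall>z. fst ((\<Theta>1 \<circ> \<Theta>2) z) = (\<tau>1 \<circ> \<tau>2) (fst z)"
  proof
    fix z
    have "fst (\<Theta>1 (\<Theta>2 z)) = \<tau>1 (fst (\<Theta>2 z))" using assms(1) unfolding goodmap_def by blast
    also have "fst (\<Theta>2 z) = \<tau>2 (fst z)" using assms(2) unfolding goodmap_def by blast
    finally show "fst ((\<Theta>1 \<circ> \<Theta>2) z) = (\<tau>1 \<circ> \<tau>2) (fst z)" by simp
  qed
  ultimately show ?thesis unfolding goodmap_def by blast
qed

lemma goodmap_pow:
  assumes "goodmap mul \<Theta> \<tau> Orb"
  shows "goodmap mul (\<Theta> ^^ n) (\<tau> ^^ n) Orb"
proof (induction n)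
  case 0
  then show ?case by (simp add: goodmap_id')
next
  case (Suc n)
  then show ?case using goodmap_comp[OF assms Suc] by (simp add: o_def)
qed



lemma core:
  fixes mul :: "'g::{t2_space, second_countable_topology} \<Rightarrow> 'g \<Rightarrow> 'g"
    and Orb :: "('a::metric_space \<times> 'g) set"
  assumes tg: "topological_group mul e ginv"
    and lc: "locally_compact_space (euclidean :: 'g topology)"
    and cpt: "compact (UNIV :: 'a set)"
    and surj: "fst ` closure Orb = UNIV"
    and trans: "\<And>z q. z \<in> Orb \<Longrightarrow> q \<in> Orb \<Longrightarrow> \<exists>\<Theta> \<tau>. goodmap mul \<Theta> \<tau> Orb \<and> \<Theta> z = q"
    and qO: "q \<in> Orb" and A: "open A" "fst q \<in> A" and Bt: "open Bt" "snd q \<in> Bt"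
  shows "\<exists>W. open W \<and> W \<noteq> {} \<and> W \<subseteq> closure (fst ` (Orb \<inter> (A \<times> Bt)))"
proof -
  obtain x0 g0 where q: "q = (x0, g0)" by (cases q)
  have "open ((\<lambda>p. mul (fst p) (snd p)) -` Bt)"
    using open_vimage[OF Bt(1) tg_cmul[OF tg]] .
  moreover have "(g0, e) \<in> (\<lambda>p. mul (fst p) (snd p)) -` Bt"
    using Bt q by (simp add: tg_rid[OF tg])
  ultimately obtain N0 V where N0V: "open N0" "open V" "(g0, e) \<in> N0 \<times> V"
      "N0 \<times> V \<subseteq> (\<lambda>p. mul (fst p) (snd p)) -` Bt"
    by (rule open_prod_elim)
  have NV: "a \<in> N0 \<Longrightarrow> v \<in> V \<Longrightarrow> mul a v \<in> Bt" for a v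
    using N0V(4) by auto
  have c2: "continuous_on UNIV (\<lambda>p. mul (ginv (fst p)) (snd p))"
    by (intro tg_mul_cont[OF tg] tg_inv_cont[OF tg] continuous_on_fst continuous_on_snd continuous_on_id)
  have "open ((\<lambda>p. mul (ginv (fst p)) (snd p)) -` V)"
    using open_vimage[OF N0V(2) c2] .
  moreover have "(e, e) \<in> (\<lambda>p. mul (ginv (fst p)) (snd p)) -` V"
    using N0V(3) by (simp add: tg_inv_e[OF tg] tg_rid[OF tg])
  ultimately obtain V1a V1b where V1: "open V1a" "open V1b" "(e, e) \<in> V1a \<times> V1b"
      "V1a \<times> V1b \<subseteq> (\<lambda>p. mul (ginv (fst p)) (snd p)) -` V"
    by (rule open_prod_elim)
  define V1 where "V1 = V1a \<inter> V1b"
  have V1o: "open V1" "e \<in> V1" using V1 by (auto simp: V1_def)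
  have V1s: "a \<in> V1 \<Longrightarrow> b \<in> V1 \<Longrightarrow> mul (ginv a) b \<in> V" for a b
    using V1(4) by (auto simp: V1_def)
  define Bg where "Bg g = (\<lambda>\<gamma>. mul (ginv g) \<gamma>) -` V1" for g
  have Bgo: "open (Bg g)" for g
  proof -
    have "continuous_on UNIV (\<lambda>\<gamma>. mul (ginv g) \<gamma>)"
      by (intro tg_mul_cont[OF tg] continuous_on_const continuous_on_id)
    then show ?thesis unfolding Bg_def using open_vimage[OF V1o(1)] by blast
  qed
  have Bgin: "g \<in> Bg g" for g
    using V1o by (simp add: Bg_def tg_linv[OF tg])
  have Bgs: "a \<in> Bg g \<Longrightarrow> b \<in> Bg g \<Longrightarrow> mul (ginv a) b \<in> V" for a b g
    using V1s[of "mul (ginv g) a" "mul (ginv g) b"] unfolding Bg_def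
    by (simp add: tg_leftsmall[OF tg])
  obtain \<B> :: "'g set set" where B: "countable \<B>" "\<And>C. C \<in> \<B> \<Longrightarrow> open C"
       "\<And>S. open S \<Longrightarrow> \<exists>U. U \<subseteq> \<B> \<and> S = \<Union>U"
    using univ_second_countable by blast
  define \<B>' where "\<B>' = {b \<in> \<B>. compact (closure b) \<and> (\<exists>g. closure b \<subseteq> Bg g)}"
  have cover: "\<exists>b\<in>\<B>'. \<gamma> \<in> b" for \<gamma>
  proof -
    obtain b0 where b0: "open b0" "\<gamma> \<in> b0" "compact (closure b0)" "closure b0 \<subseteq> Bg \<gamma>"
      using lc_nbhd[OF lc Bgo Bgin] by blast
    obtain U where U: "U \<subseteq> \<B>" "b0 = \<Union>U" using B(3)[OF b0(1)] by blast
    then obtain b where b: "b \<in> U" "\<gamma> \<in> b" using b0(2) by blast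
    have sub: "closure b \<subseteq> closure b0" using U b by (intro closure_mono) blast
    have "compact (closure b0 \<inter> closure b)"
      using b0(3) by (rule compact_Int_closed) simp
    then have "compact (closure b)" using sub by (simp add: Int_absorb1)
    then show ?thesis using b U sub b0(4) unfolding \<B>'_def by blast
  qed
  define \<G> where "\<G> = (\<lambda>b. fst ` (closure Orb \<inter> (UNIV \<times> closure b))) ` \<B>'"
  have Gc: "countable \<G>" unfolding \<G>_def \<B>'_def using B(1) by simp
  have Gcl: "closed T" if T: "T \<in> \<G>" for T
  proof -
    obtain b where b: "b \<in> \<B>'" "T = fst ` (closure Orb \<inter> (UNIV \<times> closure b))"
      using T unfolding \<G>_def by blast
    have "compact (closure b)" using b(1) unfolding \<B>'_def by blast
    then have "compact ((UNIV :: 'a set) \<times> closure b)" using cpt by (intro compact_Times)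
    then have "compact (closure Orb \<inter> (UNIV \<times> closure b))"
      by (intro closed_Int_compact) auto
    then have "compact T" unfolding b(2) by (intro compact_continuous_image continuous_on_fst continuous_on_id)
    then show ?thesis by (rule compact_imp_closed)
  qed
  have GU: "\<Union>\<G> = UNIV"
  proof -
    have "x \<in> \<Union>\<G>" for x
    proof -
      obtain z where z: "z \<in> closure Orb" "fst z = x" using surj by (metis UNIV_I imageE)
      obtain b where b: "b \<in> \<B>'" "snd z \<in> b" using cover by blast
      have "z \<in> closure Orb \<inter> (UNIV \<times> closure b)" using z b closure_subset[of b] by (cases z) auto
      then show ?thesis using z b unfolding \<G>_def by blast
    qed
    then show ?thesis by blast
  qed
  have "\<exists>T\<in>\<G>. interior T \<noteq> {}"
  proof (rule ccontr)
    assume "\<not> (\<exists>T\<in>\<G>. interior T \<noteq> {})"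
    then have allT: "closedin euclidean T \<and> euclidean interior_of T = {}" if "T \<in> \<G>" for T
      using Gcl[OF that] that closed_closedin by auto
    have lcX: "locally_compact_space (euclidean :: 'a topology)"
      using cpt compact_imp_locally_compact_space compact_space_def compactin_euclidean_iff
      by (metis topspace_euclidean)
    have "euclidean interior_of \<Union>\<G> = {}"
      by (rule Baire_category_alt[OF _ Gc allT]) (use lcX regular_space_euclidean in blast)
    then show False using GU by simp
  qed
  then obtain b where b: "b \<in> \<B>'" "interior (fst ` (closure Orb \<inter> (UNIV \<times> closure b))) \<noteq> {}"
    unfolding \<G>_def by blast
  then obtain g where g: "closure b \<subseteq> Bg g" unfolding \<B>'_def by blast
  define OX where "OX = interior (fst ` (closure Orb \<inter> (UNIV \<times> closure b)))"
  define E where "E = fst ` (Orb \<inter> (UNIV \<times> Bg g))"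
  have OXo: "open OX" "OX \<noteq> {}" using b(2) unfolding OX_def by auto
  have OXE: "OX \<subseteq> closure E"
  proof
    fix y assume "y \<in> OX"
    then have "y \<in> fst ` (closure Orb \<inter> (UNIV \<times> closure b))"
      unfolding OX_def using interior_subset by blast
    then obtain \<gamma> where yg: "(y, \<gamma>) \<in> closure Orb" "\<gamma> \<in> closure b" by force
    have "S \<inter> E \<noteq> {}" if "open S" "y \<in> S" for S
    proof -
      have "open (S \<times> Bg g)" using that Bgo by (simp add: open_Times)
      moreover have "(y, \<gamma>) \<in> S \<times> Bg g" using that yg g by auto
      ultimately have "(S \<times> Bg g) \<inter> Orb \<noteq> {}"
        using yg(1) open_Int_closure_eq_empty[of "S \<times> Bg g" Orb] by blast
      then obtain z where "z \<in> Orb" "fst z \<in> S" "snd z \<in> Bg g" by auto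
      then show ?thesis unfolding E_def by (cases z) force
    qed
    then show "y \<in> closure E"
      unfolding closure_iff_nhds_not_empty by blast
  qed
  have "OX \<inter> E \<noteq> {}"
    using OXo OXE open_Int_closure_eq_empty[of OX E] by blast
  then obtain z1 where z1: "z1 \<in> Orb" "fst z1 \<in> OX" "snd z1 \<in> Bg g"
    unfolding E_def by auto
  obtain \<Theta> \<tau> where Th: "goodmap mul \<Theta> \<tau> Orb" "\<Theta> z1 = q"
    using trans[OF z1(1) qO] by blast
  define x1 where "x1 = fst z1"
  define \<gamma>1 where "\<gamma>1 = snd z1"
  have z1eq: "z1 = (x1, \<gamma>1)" by (simp add: x1_def \<gamma>1_def)
  have Thc: "continuous_on UNIV \<Theta>" and ThO: "\<Theta> ` Orb \<subseteq> Orb"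
    and Theq: "\<And>x g h. \<Theta> (x, mul g h) = (\<tau> x, mul (snd (\<Theta> (x, g))) h)"
    and Thf: "\<And>z. fst (\<Theta> z) = \<tau> (fst z)" and tauc: "continuous_on UNIV \<tau>"
    and tauo: "\<And>A. open A \<Longrightarrow> open (\<tau> ` A)"
    using Th(1) unfolding goodmap_def by blast+
  define \<phi> where "\<phi> x = snd (\<Theta> (x, \<gamma>1))" for x
  have phic: "continuous_on UNIV \<phi>"
  proof -
    have "continuous_on UNIV (snd \<circ> \<Theta> \<circ> (\<lambda>x. (x, \<gamma>1)))"
      by (intro continuous_on_compose continuous_on_Pair continuous_on_id continuous_on_const continuous_on_snd
          continuous_on_subset[OF Thc]) auto
    then show ?thesis unfolding \<phi>_def by (simp add: o_def)
  qed
  have tx1: "\<tau> x1 = x0" using Thf[of z1] Th(2) q by (simp add: x1_def)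
  have px1: "\<phi> x1 = g0" using Th(2) q z1eq by (simp add: \<phi>_def)
  define O2 where "O2 = OX \<inter> (\<tau> -` A) \<inter> (\<phi> -` N0)"
  have O2o: "open O2" unfolding O2_def
    using OXo(1) open_vimage[OF A(1) tauc] open_vimage[OF N0V(1) phic] by blast
  have x1O2: "x1 \<in> O2" unfolding O2_def using z1(2) tx1 px1 A q N0V(3) by (simp add: x1_def)
  have key: "\<tau> ` (E \<inter> O2) \<subseteq> fst ` (Orb \<inter> (A \<times> Bt))"
  proof
    fix w assume "w \<in> \<tau> ` (E \<inter> O2)"
    then obtain y where y: "y \<in> E" "y \<in> O2" "w = \<tau> y" by blast
    then obtain \<gamma> where yg: "(y, \<gamma>) \<in> Orb" "\<gamma> \<in> Bg g" unfolding E_def by force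
    have eqg: "mul \<gamma>1 (mul (ginv \<gamma>1) \<gamma>) = \<gamma>" by (rule tg_cancel2[OF tg])
    have "\<Theta> (y, \<gamma>) = \<Theta> (y, mul \<gamma>1 (mul (ginv \<gamma>1) \<gamma>))" by (simp only: eqg)
    also have "\<dots> = (\<tau> y, mul (\<phi> y) (mul (ginv \<gamma>1) \<gamma>))"
      unfolding \<phi>_def by (rule Theq)
    finally have "\<Theta> (y, \<gamma>) = (\<tau> y, mul (\<phi> y) (mul (ginv \<gamma>1) \<gamma>))" .
    moreover have "mul (ginv \<gamma>1) \<gamma> \<in> V" using Bgs z1(3) yg(2) by (simp add: \<gamma>1_def)
    moreover have "\<phi> y \<in> N0" "\<tau> y \<in> A" using y(2) unfolding O2_def by auto
    ultimately have "\<Theta> (y, \<gamma>) \<in> Orb \<inter> (A \<times> Bt)"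
      using NV ThO yg(1) by auto
    then show "w \<in> fst ` (Orb \<inter> (A \<times> Bt))"
      using y(3) Thf[of "(y, \<gamma>)"] by force
  qed
  have "O2 \<subseteq> closure (E \<inter> O2)"
    using open_Int_closure_subset[OF O2o, of E] OXE unfolding O2_def by (auto simp: Int_commute)
  then have "\<tau> ` O2 \<subseteq> \<tau> ` closure (E \<inter> O2)" by (rule image_mono)
  also have "\<dots> \<subseteq> closure (fst ` (Orb \<inter> (A \<times> Bt)))"
  proof (rule image_closure_subset)
    show "continuous_on (closure (E \<inter> O2)) \<tau>" using continuous_on_subset[OF tauc] by blast
    show "closed (closure (fst ` (Orb \<inter> (A \<times> Bt))))" by simp
    show "\<tau> ` (E \<inter> O2) \<subseteq> closure (fst ` (Orb \<inter> (A \<times> Bt)))"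
      using key closure_subset by blast
  qed
  finally show ?thesis
    using tauo[OF O2o] x1O2 by blast
qed



lemma funpow_inv_cancel:
  fixes gg ff :: "'a \<Rightarrow> 'a"
  assumes "\<And>w. gg (ff w) = w"
  shows "(gg ^^ n) ((ff ^^ n) w) = w"
proof (induction n arbitrary: w)
  case 0 show ?case by simp
next
  case (Suc n)
  have "(gg ^^ Suc n) ((ff ^^ Suc n) w) = (gg ^^ n) (gg (ff ((ff ^^ n) w)))"
    by (simp add: funpow_swap1)
  also have "\<dots> = w" using assms Suc by simp
  finally show ?case .
qed

theorem lemma2p2:
  fixes T :: "'a::metric_space \<Rightarrow> 'a"
    and mul :: "'g::{t2_space, second_countable_topology} \<Rightarrow> 'g \<Rightarrow> 'g"
    and e :: 'g and ginv :: "'g \<Rightarrow> 'g"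
    and f :: "'a \<Rightarrow> 'g"
    and C :: "('a \<times> 'g) set"
  assumes "compact (UNIV :: 'a set)"
    and "\<exists>S. homeomorphism UNIV UNIV T S"
    and "minimal_map T"
    and "topological_group mul e ginv"
    and "locally_compact_space (euclidean :: 'g topology)"
    and "continuous_on UNIV f"
    and "regular_cocycle T mul f"
    and "surjective_orbit_closure T mul f C"
  shows "\<forall>U. openin (top_of_set C) U \<and> U \<noteq> {} \<longrightarrow> interior (fst ` U) \<noteq> {}"
proof -
  note cpt = assms(1) and tg = assms(4) and lc = assms(5) and fc = assms(6)
  obtain S where hom: "homeomorphism UNIV UNIV T S" using assms(2) by blast
  have ST: "\<And>x. S (T x) = x" and TS: "\<And>y. T (S y) = y"
    and Tc: "continuous_on UNIV T" and Sc: "continuous_on UNIV S"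
    using hom unfolding homeomorphism_def by auto
  define F where "F = skew T mul f"
  obtain p where p: "C = closure (full_orbit F p)" "fst ` C = UNIV"
    using assms(8) unfolding surjective_orbit_closure_def F_def by blast
  have Feq: "F z = (T (fst z), mul (f (fst z)) (snd z))" for z
    unfolding F_def skew_def by (simp add: split_beta)
  define Finv where "Finv z = (S (fst z), mul (ginv (f (S (fst z)))) (snd z))" for z
  have FFi: "F (Finv z) = z" for z
    by (simp add: Feq Finv_def TS tg_cancel2[OF tg])
  have FiF: "Finv (F z) = z" for z
    by (simp add: Feq Finv_def ST tg_cancel[OF tg])
  have invF: "inv F = Finv" by (rule inv_equality) (use FFi FiF in auto)
  define Orb where "Orb = full_orbit F p"
  have Orb_def2: "Orb = {(F ^^ n) p |n. True} \<union> {(Finv ^^ n) p |n. True}"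
    unfolding Orb_def full_orbit_def invF ..
  have FOrb: "F ` Orb \<subseteq> Orb"
  proof
    fix w assume "w \<in> F ` Orb"
    then obtain z where z: "z \<in> Orb" "w = F z" by blast
    then consider n where "z = (F ^^ n) p" | n where "z = (Finv ^^ n) p" unfolding Orb_def2 by blast
    then show "w \<in> Orb"
    proof cases
      case 1 then have "w = (F ^^ Suc n) p" using z by simp
      then show ?thesis unfolding Orb_def2 by blast
    next
      case 2 show ?thesis
      proof (cases n)
        case 0 then have "w = (F ^^ Suc 0) p" using z 2 by simp
        then show ?thesis unfolding Orb_def2 by blast
      next
        case (Suc m) then have "w = (Finv ^^ m) p" using z 2 FFi by simp
        then show ?thesis unfolding Orb_def2 by blast
      qed
    qed
  qed
  have FiOrb: "Finv ` Orb \<subseteq> Orb"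
  proof
    fix w assume "w \<in> Finv ` Orb"
    then obtain z where z: "z \<in> Orb" "w = Finv z" by blast
    then consider n where "z = (F ^^ n) p" | n where "z = (Finv ^^ n) p" unfolding Orb_def2 by blast
    then show "w \<in> Orb"
    proof cases
      case 2 then have "w = (Finv ^^ Suc n) p" using z by simp
      then show ?thesis unfolding Orb_def2 by blast
    next
      case 1 show ?thesis
      proof (cases n)
        case 0 then have "w = (Finv ^^ Suc 0) p" using z 1 by simp
        then show ?thesis unfolding Orb_def2 by blast
      next
        case (Suc m) then have "w = (F ^^ m) p" using z 1 FiF by simp
        then show ?thesis unfolding Orb_def2 by blast
      qed
    qed
  qed
  have Tim: "T ` A = S -` A" for A
    using ST TS by (auto intro: image_eqI[where x="S _"])
  have Sim: "S ` A = T -` A" for A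
    using ST TS by (auto intro: image_eqI[where x="T _"])
  have gF: "goodmap mul F T Orb"
  proof -
    have "continuous_on UNIV (\<lambda>z. (T (fst z), mul (f (fst z)) (snd z)))"
      by (intro continuous_on_Pair tg_mul_cont[OF tg] continuous_on_compose2[OF Tc continuous_on_fst]
          continuous_on_compose2[OF fc continuous_on_fst] continuous_on_snd) auto
    then have "continuous_on UNIV F" using Feq by presburger
    moreover have "F (x, mul g h) = (T x, mul (snd (F (x, g))) h)" for x g h
      by (simp add: Feq tg_assoc[OF tg])
    moreover have "open (T ` A)" if "open A" for A
      unfolding Tim using open_vimage[OF that Sc] .
    ultimately show ?thesis unfolding goodmap_def using FOrb Tc by (simp add: Feq)
  qed
  have gFi: "goodmap mul Finv S Orb"
  proof -
    have "continuous_on UNIV (\<lambda>z. (S (fst z), mul (ginv (f (S (fst z)))) (snd z)))"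
      by (intro continuous_on_Pair tg_mul_cont[OF tg] tg_inv_cont[OF tg] continuous_on_compose2[OF Sc continuous_on_fst]
          continuous_on_compose2[OF fc] continuous_on_snd) auto
    then have "continuous_on UNIV Finv" unfolding Finv_def by simp
    moreover have "Finv (x, mul g h) = (S x, mul (snd (Finv (x, g))) h)" for x g h
      by (simp add: Finv_def tg_assoc[OF tg])
    moreover have "open (S ` A)" if "open A" for A
      unfolding Sim using open_vimage[OF that Tc] .
    ultimately show ?thesis unfolding goodmap_def using FiOrb Sc by (simp add: Finv_def)
  qed
  have toP: "\<exists>\<Theta> \<tau>. goodmap mul \<Theta> \<tau> Orb \<and> \<Theta> z = p" if zO: "z \<in> Orb" for z
  proof -
    consider n where "z = (F ^^ n) p" | n where "z = (Finv ^^ n) p" using zO unfolding Orb_def2 by blast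
    then show ?thesis
    proof cases
      case 1 then show ?thesis using goodmap_pow[OF gFi, of n] funpow_inv_cancel[of Finv F n p] FiF by blast
    next
      case 2 then show ?thesis using goodmap_pow[OF gF, of n] funpow_inv_cancel[of F Finv n p] FFi by blast
    qed
  qed
  have fromP: "\<exists>\<Theta> \<tau>. goodmap mul \<Theta> \<tau> Orb \<and> \<Theta> p = q" if qO: "q \<in> Orb" for q
  proof -
    consider n where "q = (F ^^ n) p" | n where "q = (Finv ^^ n) p" using qO unfolding Orb_def2 by blast
    then show ?thesis
    proof cases
      case 1 then show ?thesis using goodmap_pow[OF gF, of n] by blast
    next
      case 2 then show ?thesis using goodmap_pow[OF gFi, of n] by blast
    qed
  qed
  have trans: "\<exists>\<Theta> \<tau>. goodmap mul \<Theta> \<tau> Orb \<and> \<Theta> z = q" if zq: "z \<in> Orb" "q \<in> Orb" for z q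
  proof -
    obtain \<Theta>1 \<tau>1 where 1: "goodmap mul \<Theta>1 \<tau>1 Orb" "\<Theta>1 z = p" using toP[OF zq(1)] by blast
    obtain \<Theta>2 \<tau>2 where 2: "goodmap mul \<Theta>2 \<tau>2 Orb" "\<Theta>2 p = q" using fromP[OF zq(2)] by blast
    show ?thesis using goodmap_comp[OF 2(1) 1(1)] 1(2) 2(2) by (intro exI[of _ "\<Theta>2 \<circ> \<Theta>1"] exI[of _ "\<tau>2 \<circ> \<tau>1"]) simp
  qed
  have CO: "C = closure Orb" using p(1) Orb_def by simp
  have surj: "fst ` closure Orb = UNIV" using p(2) CO by simp
  show ?thesis
  proof (intro allI impI)
    fix U assume U: "openin (top_of_set C) U \<and> U \<noteq> {}"
    then obtain U' where U': "open U'" "U = C \<inter> U'" unfolding openin_open by blast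
    obtain u where "u \<in> U" using U by blast
    then have "U' \<inter> closure Orb \<noteq> {}" using U' CO by blast
    then have "U' \<inter> Orb \<noteq> {}" using open_Int_closure_eq_empty[OF U'(1)] by blast
    then obtain q where q: "q \<in> Orb" "q \<in> U'" by blast
    obtain A Bt where AB: "open A" "open Bt" "q \<in> A \<times> Bt" "A \<times> Bt \<subseteq> U'"
      using open_prod_elim[OF U'(1) q(2)] by blast
    obtain x0 g0 where qq: "q = (x0, g0)" by (cases q)
    obtain r where r: "r > 0" "ball x0 r \<subseteq> A" using AB qq open_contains_ball by force
    define A1 where "A1 = ball x0 (r/2)"
    have clA1: "closure A1 \<subseteq> A"
    proof -
      have "closure A1 \<subseteq> cball x0 (r/2)" unfolding A1_def
        by (rule closure_minimal[OF ball_subset_cball closed_cball])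
      also have "\<dots> \<subseteq> ball x0 r" using r(1) by (auto simp: subset_eq)
      finally show ?thesis using r(2) by blast
    qed
    have A1o: "open A1" "x0 \<in> A1" using r(1) by (auto simp: A1_def)
    obtain Bt1 where Bt1: "open Bt1" "g0 \<in> Bt1" "compact (closure Bt1)" "closure Bt1 \<subseteq> Bt"
      using lc_nbhd[OF lc AB(2)] AB(3) qq by auto
    obtain W where W: "open W" "W \<noteq> {}" "W \<subseteq> closure (fst ` (Orb \<inter> (A1 \<times> Bt1)))"
      using core[OF tg lc cpt surj trans q(1) A1o(1) _ Bt1(1)] A1o Bt1 qq by auto
    define P where "P = fst ` (C \<inter> (closure A1 \<times> closure Bt1))"
    have "compact (closure A1)"
      using compact_Int_closed[OF cpt closed_closure, of A1] by simp
    then have "compact (closure A1 \<times> closure Bt1)" using Bt1(3) by (rule compact_Times)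
    then have "compact (C \<inter> (closure A1 \<times> closure Bt1))"
      using CO by (intro closed_Int_compact) auto
    then have "compact P" unfolding P_def
      by (intro compact_continuous_image continuous_on_fst continuous_on_id)
    then have Pc: "closed P" by (rule compact_imp_closed)
    have "fst ` (Orb \<inter> (A1 \<times> Bt1)) \<subseteq> P"
      unfolding P_def using CO closure_subset[of Orb] closure_subset[of A1] closure_subset[of Bt1]
      by (intro image_mono) blast
    then have "closure (fst ` (Orb \<inter> (A1 \<times> Bt1))) \<subseteq> P" using Pc by (rule closure_minimal)
    also have "P \<subseteq> fst ` U"
      unfolding P_def U'(2) using clA1 Bt1(4) AB(4) by (intro image_mono) blast
    finally have "W \<subseteq> interior (fst ` U)" using W by (intro interior_maximal) auto
    then show "interior (fst ` U) \<noteq> {}" using W(2) by blast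
  qed
qed


end
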